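(* Let $d\ge3$ and $\overrightarrow{w}\in(0,\infty)^d$. Suppose there is a partition of $\{1,\dots,d\}$ into pairwise disjoint nonempty sets $A,B,C$ such that, with $a=\sum_{i\in A}w_i$, $b=\sum_{i\in B}w_i$, $c=\sum_{i\in C}w_i$, one has $a+b+c\ge 2\max\{a,b,c\}$. Then there exists a random vector $\overrightarrow{U}=(U_1,\dots,U_d)$ with each $U_i$ uniform on $[0,1]$ such that $\sum_{i=1}^d w_iU_i=\frac12\sum_{i=1}^dw_i$ almost surely. *)

theory Defs
  imports "HOL-Probability.Probability"
begin

end

theory Submission
  imports Defs
begin

abbreviation U :: "real measure" where "U \<equiv> uniform_measure lborel {0..1}"

lemma U_prob: "prob_space U"
  by (rule prob_space_uniform_measure) auto

lemma U_sets[simp]: "sets U = sets borel" by simp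
lemma U_space[simp]: "space U = UNIV" by simp

lemma measure_U: "S \<in> sets borel \<Longrightarrow> measure U S = measure lborel ({0..1} \<inter> S)"
  by (subst measure_uniform_measure) auto

lemma Icc_Un_measure:
  fixes l1 u1 l2 u2 :: real
  assumes "l1 \<le> u1" "u1 < l2" "l2 \<le> u2"
  shows "measure lborel ({l1..u1} \<union> {l2..u2}) = (u1 - l1) + (u2 - l2)"
  using assms by (subst measure_Union) auto

lemma distr_U_eq:
  fixes f :: "real \<Rightarrow> real"
  assumes f: "f \<in> borel_measurable borel"
    and H: "\<And>x. measure lborel ({0..1} \<inter> {T. f T \<le> x}) = measure lborel ({0..1} \<inter> {..x})"
  shows "distr U lborel f = U"
proof (rule cdf_unique)
  interpret P: prob_space U by (rule U_prob)
  have fm: "f \<in> measurable U lborel" using f by simp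
  show "real_distribution (distr U lborel f)"
    unfolding real_distribution_def real_distribution_axioms_def
    using P.prob_space_distr[OF fm] by simp
  show "real_distribution U"
    unfolding real_distribution_def real_distribution_axioms_def
    using U_prob by simp
  show "cdf (distr U lborel f) = cdf U"
  proof
    fix x
    have "cdf (distr U lborel f) x = measure U (f -` {..x})"
      unfolding cdf_def by (subst measure_distr[OF fm]) auto
    also have "\<dots> = measure lborel ({0..1} \<inter> {T. f T \<le> x})"
    proof -
      have fs: "{T. f T \<le> x} \<in> sets borel" using f by measurable
      show ?thesis by (subst measure_U) (auto simp: vimage_def intro: fs)
    qed
    also have "\<dots> = measure U {..x}" using H by (subst measure_U) auto
    finally show "cdf (distr U lborel f) x = cdf U x" unfolding cdf_def .
  qed
qed

definition tent :: "real \<Rightarrow> real \<Rightarrow> real" where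
  "tent u T = (if T \<le> u then T / u else (1 - T) / (1 - u))"

definition shft :: "real \<Rightarrow> real \<Rightarrow> real" where
  "shft p T = (if T < p then T + 1 - p else T - p)"

lemma tent_le1: "0 \<le> T \<Longrightarrow> T \<le> 1 \<Longrightarrow> 0 \<le> u \<Longrightarrow> u \<le> 1 \<Longrightarrow> tent u T \<le> 1"
  unfolding tent_def by (auto simp: divide_le_eq_1)
lemma tent_set:
  assumes "0 \<le> x" "x < 1" "u < 1" "0 \<le> u"
  shows "{0..1} \<inter> {T. tent u T \<le> x} = {0..u*x} \<union> {1-(1-u)*x..1}"
proof (intro set_eqI iffI)
  fix T assume T: "T \<in> {0..1} \<inter> {T. tent u T \<le> x}"
  have T0: "0 \<le> T" "T \<le> 1" "tent u T \<le> x" using T by auto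
  show "T \<in> {0..u*x} \<union> {1-(1-u)*x..1}"
  proof (cases "T \<le> u")
    case True
    show ?thesis
    proof (cases "u = 0")
      case True then show ?thesis using \<open>T \<le> u\<close> T0 by simp
    next
      case False
      then have "T / u \<le> x" using T0 True by (simp add: tent_def)
      then have "T \<le> u * x" using False assms by (simp add: pos_divide_le_eq mult.commute)
      then show ?thesis using T0 by simp
    qed
  next
    case False
    then have "(1 - T) / (1 - u) \<le> x" using T0 by (simp add: tent_def)
    then have "1 - T \<le> (1 - u) * x" using assms by (simp add: pos_divide_le_eq mult.commute)
    then show ?thesis using T0 by simp
  qed
next
  fix T assume T: "T \<in> {0..u*x} \<union> {1-(1-u)*x..1}"
  have ux: "u*x \<le> u" using assms by (simp add: mult_left_le)
  have "(1-u)*x < (1-u)*1" using assms by (intro mult_strict_left_mono) auto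
  then have ux2: "u < 1-(1-u)*x" by (simp add: algebra_simps)
  show "T \<in> {0..1} \<inter> {T. tent u T \<le> x}"
  proof (cases "T \<le> u*x")
    case True
    then have T0: "0 \<le> T" "T \<le> u" using T ux ux2 by auto
    show ?thesis
    proof (cases "u = 0")
      case True then show ?thesis using T0 assms by (simp add: tent_def)
    next
      case False
      then have "T / u \<le> x" using \<open>T \<le> u*x\<close> assms by (simp add: pos_divide_le_eq mult.commute)
      then show ?thesis using T0 assms by (simp add: tent_def)
    qed
  next
    case False
    then have T1: "1-(1-u)*x \<le> T" "T \<le> 1" using T by auto
    then have "\<not> T \<le> u" using ux2 by linarith
    moreover have "(1 - T) / (1 - u) \<le> x" using T1 assms by (simp add: pos_divide_le_eq mult.commute)
    ultimately show ?thesis using T1 assms ux2 by (simp add: tent_def)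
  qed
qed

lemma tent_meas[measurable]: "tent u \<in> borel_measurable borel"
  unfolding tent_def by measurable

lemma shft_meas[measurable]: "shft p \<in> borel_measurable borel"
  unfolding shft_def by measurable

lemma tent_distr:
  assumes u: "0 \<le> u" "u \<le> 1"
  shows "distr U lborel (tent u) = U"
proof (rule distr_U_eq)
  show "tent u \<in> borel_measurable borel" by simp
  fix x :: real
  consider "x < 0" | "1 \<le> x" | "0 \<le> x" "x < 1" "u = 1" | "0 \<le> x" "x < 1" "u < 1"
    using u by linarith
  then show "measure lborel ({0..1} \<inter> {T. tent u T \<le> x}) = measure lborel ({0..1} \<inter> {..x})"
  proof cases
    case 1
    have "{0..1} \<inter> {T. tent u T \<le> x} = {}"
      using 1 u by (auto simp: tent_def not_le divide_nonneg_nonneg intro!: divide_nonneg_nonneg)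
      (smt (verit) divide_nonneg_nonneg)+
    moreover have "{0..1} \<inter> {..x} = {}" using 1 by auto
    ultimately show ?thesis using 1 u by simp
  next
    case 2
    have "{0..1} \<inter> {T. tent u T \<le> x} = {0..1}"
      using 2 u tent_le1[of _ u] by force
    moreover have "{0..1} \<inter> {..x} = {0..1::real}" using 2 by auto
    ultimately show ?thesis using 2 u by simp
  next
    case 3
    have "{0..1} \<inter> {T. tent u T \<le> x} = {0..x}"
      using 3 by (auto simp: tent_def)
    moreover have "{0..1} \<inter> {..x} = {0..x::real}" using 3 by auto
    ultimately show ?thesis using 3 u by simp
  next
    case 4
    have "{0..1} \<inter> {T. tent u T \<le> x} = {0..u*x} \<union> {1-(1-u)*x..1}"
      using 4 u by (intro tent_set) auto
    moreover have "{0..1} \<inter> {..x} = {0..x::real}" using 4 by auto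
    moreover have "measure lborel ({0..u*x} \<union> {1-(1-u)*x..1}) = (u*x - 0) + (1 - (1-(1-u)*x))"
      using 4 u by (intro Icc_Un_measure) (auto simp: algebra_simps mult_left_le intro: mult_nonneg_nonneg mult_left_le_one_le)
    ultimately show ?thesis using 4 by (simp add: algebra_simps)
  qed
qed

lemma shft_distr:
  assumes p: "0 \<le> p" "p \<le> 1"
  shows "distr U lborel (shft p) = U"
proof (rule distr_U_eq)
  show "shft p \<in> borel_measurable borel" by simp
  fix x :: real
  consider "x < 0" | "1 \<le> x" | "0 \<le> x" "x < 1" "x + p < 1" | "0 \<le> x" "x < 1" "1 \<le> x + p"
    using p by linarith
  then show "measure lborel ({0..1} \<inter> {T. shft p T \<le> x}) = measure lborel ({0..1} \<inter> {..x})"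
  proof cases
    case 1
    have "{0..1} \<inter> {T. shft p T \<le> x} = {}"
      using 1 p by (auto simp: shft_def)
    moreover have "{0..1} \<inter> {..x} = {}" using 1 by auto
    ultimately show ?thesis using 1 p by simp
  next
    case 2
    have "{0..1} \<inter> {T. shft p T \<le> x} = {0..1}"
      using 2 p by (auto simp: shft_def)
    moreover have "{0..1} \<inter> {..x} = {0..1::real}" using 2 by auto
    ultimately show ?thesis using 2 p by simp
  next
    case 3
    have "{0..1} \<inter> {T. shft p T \<le> x} = {p..x+p}"
      using 3 p by (auto simp: shft_def)
    moreover have "{0..1} \<inter> {..x} = {0..x::real}" using 3 by auto
    ultimately show ?thesis using 3 p by simp
  next
    case 4
    have "{0..1} \<inter> {T. shft p T \<le> x} = {0..x+p-1} \<union> {p..1}"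
      using 4 p by (auto simp: shft_def)
    moreover have "{0..1} \<inter> {..x} = {0..x::real}" using 4 by auto
    moreover have "measure lborel ({0..x+p-1} \<union> {p..1}) = (x+p-1 - 0) + (1 - p)"
      using 4 p by (intro Icc_Un_measure) auto
    ultimately show ?thesis using 4 by (simp add: algebra_simps)
  qed
qed



locale tri =
  fixes a b c p q r D t1 t2 :: real
  assumes ha: "q + r = 2*a" and hb: "p + r = 2*b" and hc: "p + q = 2*c"
    and hD: "D = p*q+q*r+r*p" and D: "D > 0"
    and p: "p \<ge> 0" and q: "q \<ge> 0" and r: "r \<ge> 0"
    and a0: "a > 0" and b0: "b > 0" and c0: "c > 0"
    and ht1: "t1 = p*r/D" and ht2: "t2 = 2*a*p/D"
begin

lemma aa: "a = (q+r)/2" using ha by simp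
lemma bb: "b = (p+r)/2" using hb by simp
lemma cc: "c = (p+q)/2" using hc by simp

lemma h1t1: "1 - t1 = 2*b*q/D"
proof -
  have "D - p*r = q*(p+r)" using hD by (simp add: algebra_simps)
  then have "D - p*r = 2*b*q" using hb by simp
  then show ?thesis using D unfolding ht1 by (simp add: field_simps)
qed

lemma h1t2t1: "1 - t2 + t1 = 2*c*r/D"
proof -
  have "D - 2*a*p + p*r = r*(p+q)" using hD by (simp add: aa algebra_simps)
  then have "D - 2*a*p + p*r = 2*c*r" using hc by simp
  then show ?thesis using D unfolding ht1 ht2 by (simp add: field_simps)
qed

lemma ht2t1: "t2 - t1 = p*q/D"
proof -
  have "2*a*p - p*r = p*q" by (simp add: aa algebra_simps)
  then show ?thesis using D unfolding ht1 ht2 by (simp add: field_simps)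
qed

lemma h1t2: "1 - t2 = q*r/D"
proof -
  have "D - 2*a*p = q*r" using hD by (simp add: aa algebra_simps)
  then show ?thesis using D unfolding ht2 by (simp add: field_simps)
qed

lemma R1:
  assumes "p > 0" "r > 0"
  shows "a*((t2-T)/t2) + b*(T/t1) + c*((t1-T)/(1-t2+t1)) = (a+b+c)/2"
proof -
  have f1: "a*((t2-T)/t2) = a - T*D/(2*p)"
    using D a0 assms unfolding ht2 by (simp add: field_simps)
  have f2: "b*(T/t1) = T*D*(2*b)/(2*p*r)"
    using D assms unfolding ht1 by (simp add: field_simps)
  have f3: "c*((t1-T)/(1-t2+t1)) = p/2 - T*D/(2*r)"
    using D c0 assms unfolding h1t2t1 unfolding ht1 by (simp add: field_simps)
  have f4: "T*D*(2*b)/(2*p*r) = T*D/(2*p) + T*D/(2*r)"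
    using assms by (simp add: bb field_simps)
  show ?thesis
  proof -
    have "(a+b+c)/2 = a + p/2" by (simp add: aa bb cc field_simps)
    then show ?thesis unfolding f1 f2 f3 f4 by (simp add: algebra_simps)
  qed
qed

lemma R2:
  assumes "p > 0" "q > 0"
  shows "a*((t2-T)/t2) + b*((1-T)/(1-t1)) + c*((T-t1)/(t2-t1)) = (a+b+c)/2"
proof -
  have f1: "a*((t2-T)/t2) = a - T*D/(2*p)"
    using D a0 assms unfolding ht2 by (simp add: field_simps)
  have f2: "b*((1-T)/(1-t1)) = D/(2*q) - T*D/(2*q)"
    using D b0 assms unfolding h1t1 by (simp add: field_simps)
  have f3: "c*((T-t1)/(t2-t1)) = T*D*(2*c)/(2*p*q) - r*(2*c)/(2*q)"
    using D assms unfolding ht2t1 unfolding ht1 by (simp add: field_simps)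
  have f4: "T*D*(2*c)/(2*p*q) = T*D/(2*p) + T*D/(2*q)"
    using assms by (simp add: cc field_simps)
  have f5: "D/(2*q) - r*(2*c)/(2*q) = p/2"
  proof -
    have "D - r*(2*c) = p*q" using hD by (simp add: cc algebra_simps)
    then show ?thesis using assms by (simp add: field_simps)
  qed
  show ?thesis
  proof -
    have "(a+b+c)/2 = a + p/2" by (simp add: aa bb cc field_simps)
    then show ?thesis unfolding f1 f2 f3 f4 using f5 by (simp add: algebra_simps)
  qed
qed

lemma R3:
  assumes "q > 0" "r > 0"
  shows "a*((T-t2)/(1-t2)) + b*((1-T)/(1-t1)) + c*((1-T+t1)/(1-t2+t1)) = (a+b+c)/2"
proof -
  have f1: "a*((T-t2)/(1-t2)) = a*T*D/(q*r) - a*(2*a*p)/(q*r)"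
    using D a0 assms unfolding h1t2 unfolding ht2 by (simp add: field_simps)
  have f1': "a*T*D/(q*r) = T*D/(2*q) + T*D/(2*r)"
    using assms by (simp add: aa field_simps)
  have f2: "b*((1-T)/(1-t1)) = D/(2*q) - T*D/(2*q)"
    using D b0 assms unfolding h1t1 by (simp add: field_simps)
  have f3: "c*((1-T+t1)/(1-t2+t1)) = D/(2*r) - T*D/(2*r) + p/2"
    using D c0 assms unfolding h1t2t1 unfolding ht1 by (simp add: field_simps)
  have g: "D - 2*a*p = q*r" using hD by (simp add: aa algebra_simps)
  have f5: "D/(2*q) + D/(2*r) - a*(2*a*p)/(q*r) = a"
  proof -
    have "D/(2*q) + D/(2*r) - a*(2*a*p)/(q*r) = a*(D - 2*a*p)/(q*r)"
      using assms by (simp add: aa field_simps)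
    then show ?thesis using g assms by simp
  qed
  have "(a+b+c)/2 = a + p/2" by (simp add: aa bb cc field_simps)
  then show ?thesis unfolding f1 f1' f2 f3 using f5 by (simp add: algebra_simps)
qed


definition "X T = tent (1-t2) (shft t2 T)"
definition "Y T = tent t1 T"
definition "Z T = tent (t2-t1) (shft t1 T)"

lemma t1_ge: "0 \<le> t1" using D p r unfolding ht1 by simp
lemma t12: "t1 \<le> t2" using ht2t1 D p q by (smt (verit) divide_nonneg_pos mult_nonneg_nonneg)
lemma t2_le: "t2 \<le> 1" using h1t2 D q r by (smt (verit) divide_nonneg_pos mult_nonneg_nonneg)

lemma pointwise:
  assumes T: "0 < T" "T < 1" "T \<noteq> t1" "T \<noteq> t2"
  shows "a * X T + b * Y T + c * Z T = (a+b+c)/2"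
proof -
  consider "T < t1" | "t1 < T" "T < t2" | "t2 < T"
    using T by linarith
  then show ?thesis
  proof cases
    case 1
    then have "p*r/D > 0" using T ht1 by simp
    then have pr: "p > 0" "r > 0" using p r D
      by (auto simp: zero_less_divide_iff zero_less_mult_iff)
    have "T < t2" using 1 t12 by simp
    then have "X T = (t2-T)/t2" "Y T = T/t1" "Z T = (t1-T)/(1-t2+t1)"
      using 1 T t2_le unfolding X_def Y_def Z_def tent_def shft_def
      by (auto simp: algebra_simps)
    then show ?thesis using R1[OF pr] by simp
  next
    case 2
    then have "p*q/D > 0" using ht2t1 by simp
    then have pq: "p > 0" "q > 0" using p q D
      by (auto simp: zero_less_divide_iff zero_less_mult_iff)
    have "X T = (t2-T)/t2" "Y T = (1-T)/(1-t1)" "Z T = (T-t1)/(t2-t1)"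
      using 2 T t2_le unfolding X_def Y_def Z_def tent_def shft_def
      by (auto simp: algebra_simps)
    then show ?thesis using R2[OF pq] by simp
  next
    case 3
    then have "q*r/D > 0" using h1t2 T by simp
    then have qr: "q > 0" "r > 0" using q r D
      by (auto simp: zero_less_divide_iff zero_less_mult_iff)
    have "X T = (T-t2)/(1-t2)" "Y T = (1-T)/(1-t1)" "Z T = (1-T+t1)/(1-t2+t1)"
      using 3 T t2_le t12 unfolding X_def Y_def Z_def tent_def shft_def
      by (auto simp: algebra_simps)
    then show ?thesis using R3[OF qr] by simp
  qed
qed

end

lemma comp_distr:
  assumes "0 \<le> u" "u \<le> 1" "0 \<le> v" "v \<le> 1"
  shows "distr U lborel (\<lambda>T. tent u (shft v T)) = U"
proof -
  have "distr U lborel (\<lambda>T. tent u (shft v T)) = distr (distr U lborel (shft v)) lborel (tent u)"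
    by (subst distr_distr) (auto simp: comp_def)
  also have "\<dots> = U" using assms by (simp add: shft_distr tent_distr)
  finally show ?thesis .
qed


theorem mainTheorem6:
  fixes d :: nat and w :: "nat \<Rightarrow> real" and A B C :: "nat set"
  assumes "d \<ge> 3"
    and "\<forall>i\<in>{1..d}. w i > 0"
    and "A \<union> B \<union> C = {1..d}"
    and "A \<inter> B = {}" and "A \<inter> C = {}" and "B \<inter> C = {}"
    and "A \<noteq> {}" and "B \<noteq> {}" and "C \<noteq> {}"
    and "(\<Sum>i\<in>A. w i) + (\<Sum>i\<in>B. w i) + (\<Sum>i\<in>C. w i)
           \<ge> 2 * max (\<Sum>i\<in>A. w i) (max (\<Sum>i\<in>B. w i) (\<Sum>i\<in>C. w i))"
  shows "\<exists>M :: (nat \<Rightarrow> real) measure.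
           prob_space M \<and>
           sets M = sets (PiM {1..d} (\<lambda>_. lborel)) \<and>
           (\<forall>i\<in>{1..d}. distr M lborel (\<lambda>x. x i) = uniform_measure lborel {0..1}) \<and>
           (AE x in M. (\<Sum>i=1..d. w i * x i) = (\<Sum>i=1..d. w i) / 2)"
proof -
  note wpos = assms(2) and ABC = assms(3) and dj = assms(4-6)
  define a where "a = (\<Sum>i\<in>A. w i)"
  define b where "b = (\<Sum>i\<in>B. w i)"
  define c where "c = (\<Sum>i\<in>C. w i)"
  have fin: "finite A" "finite B" "finite C"
    using ABC by (metis finite_Un finite_atLeastAtMost)+
  have sub: "A \<subseteq> {1..d}" "B \<subseteq> {1..d}" "C \<subseteq> {1..d}" using ABC by auto
  have a0: "a > 0" unfolding a_def using fin sub wpos assms(7) by (intro sum_pos) auto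
  have b0: "b > 0" unfolding b_def using fin sub wpos assms(8) by (intro sum_pos) auto
  have c0: "c > 0" unfolding c_def using fin sub wpos assms(9) by (intro sum_pos) auto
  have mx: "a + b + c \<ge> 2 * max a (max b c)" using assms(10) unfolding a_def b_def c_def .
  define p where "p = b+c-a"
  define q where "q = a-b+c"
  define r where "r = a+b-c"
  define D where "D = p*q+q*r+r*p"
  have p0: "p \<ge> 0" "q \<ge> 0" "r \<ge> 0" using mx unfolding p_def q_def r_def by linarith+
  have D0: "D > 0"
  proof (rule ccontr)
    assume "\<not> D > 0"
    moreover have "p*q \<ge> 0" "q*r \<ge> 0" "r*p \<ge> 0" using p0 by auto
    ultimately have "p*q = 0" "q*r = 0" "r*p = 0" unfolding D_def by linarith+
    then show False using a0 b0 c0 unfolding p_def q_def r_def by auto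
  qed
  define t1 where "t1 = p*r/D"
  define t2 where "t2 = 2*a*p/D"
  interpret tri a b c p q r D t1 t2
    by unfold_locales (use p0 D0 a0 b0 c0 in \<open>auto simp: p_def q_def r_def D_def t1_def t2_def\<close>)
  define F where "F = (\<lambda>T i. if i \<in> A then X T else if i \<in> B then Y T else if i \<in> C then Z T else undefined)"
  have Fm: "F \<in> measurable U (PiM {1..d} (\<lambda>_. lborel))"
    unfolding F_def
  proof (rule measurable_PiM_single')
    fix i assume "i \<in> {1..d}"
    show "(\<lambda>T. if i \<in> A then X T else if i \<in> B then Y T else if i \<in> C then Z T else undefined) \<in> measurable U lborel"
      unfolding X_def Y_def Z_def by (cases "i \<in> A"; cases "i \<in> B"; cases "i \<in> C") auto
  next
    show "(\<lambda>T i. if i \<in> A then X T else if i \<in> B then Y T else if i \<in> C then Z T else undefined)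
      \<in> space U \<rightarrow> (\<Pi>\<^sub>E i\<in>{1..d}. space lborel)"
    proof (intro funcsetI PiE_I)
      fix T i assume "i \<notin> {1..d}"
      then have "i \<notin> A" "i \<notin> B" "i \<notin> C" using sub by auto
      then show "(if i \<in> A then X T else if i \<in> B then Y T else if i \<in> C then Z T else undefined) = undefined"
        by simp
    qed auto
  qed
  define M where "M = distr U (PiM {1..d} (\<lambda>_. lborel)) F"
  interpret UP: prob_space U by (rule U_prob)
  have "prob_space M" unfolding M_def by (rule UP.prob_space_distr[OF Fm])
  moreover have "sets M = sets (PiM {1..d} (\<lambda>_. lborel))" unfolding M_def by simp
  moreover have "\<forall>i\<in>{1..d}. distr M lborel (\<lambda>x. x i) = U"
  proof
    fix i assume i: "i \<in> {1..d}"
    have "distr M lborel (\<lambda>x. x i) = distr U lborel (\<lambda>T. F T i)"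
      unfolding M_def using i by (subst distr_distr[OF _ Fm]) (auto simp: comp_def)
    also have "\<dots> = U"
    proof -
      have tt: "0 \<le> t1" "t1 \<le> t2" "t2 \<le> 1" using t1_ge t12 t2_le by auto
      consider "i \<in> A" | "i \<notin> A" "i \<in> B" | "i \<notin> A" "i \<notin> B" "i \<in> C" using i unfolding ABC[symmetric] by blast
      then show ?thesis
      proof cases
        case 1
        then have "(\<lambda>T. F T i) = (\<lambda>T. tent (1-t2) (shft t2 T))" unfolding F_def X_def by auto
        then show ?thesis using tt comp_distr[of "1-t2" t2] by simp
      next
        case 2
        then have "(\<lambda>T. F T i) = tent t1" unfolding F_def Y_def by auto
        then show ?thesis using tt tent_distr[of t1] by simp
      next
        case 3
        then have "(\<lambda>T. F T i) = (\<lambda>T. tent (t2-t1) (shft t1 T))" unfolding F_def Z_def by auto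
        then show ?thesis using tt comp_distr[of "t2-t1" t1] by simp
      qed
    qed
    finally show "distr M lborel (\<lambda>x. x i) = U" .
  qed
  moreover have "AE x in M. (\<Sum>i=1..d. w i * x i) = (\<Sum>i=1..d. w i) / 2"
  proof -
    have tot: "(\<Sum>i=1..d. w i) = a + b + c"
      unfolding a_def b_def c_def ABC[symmetric] using fin dj
      by (simp add: sum.union_disjoint Int_Un_distrib2)
    have sumF: "(\<Sum>i=1..d. w i * F T i) = a * X T + b * Y T + c * Z T" for T
    proof -
      have "(\<Sum>i=1..d. w i * F T i) = (\<Sum>i\<in>A. w i * F T i) + (\<Sum>i\<in>B. w i * F T i) + (\<Sum>i\<in>C. w i * F T i)"
        unfolding ABC[symmetric] using fin dj
        by (simp add: sum.union_disjoint Int_Un_distrib2)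
      also have "(\<Sum>i\<in>A. w i * F T i) = a * X T"
        unfolding a_def F_def sum_distrib_right by (rule sum.cong) auto
      also have "(\<Sum>i\<in>B. w i * F T i) = b * Y T"
        unfolding b_def F_def sum_distrib_right using dj by (intro sum.cong) auto
      also have "(\<Sum>i\<in>C. w i * F T i) = c * Z T"
        unfolding c_def F_def sum_distrib_right using dj by (intro sum.cong) auto
      finally show ?thesis .
    qed
    have "AE T in U. (\<Sum>i=1..d. w i * F T i) = (\<Sum>i=1..d. w i) / 2"
    proof (rule AE_uniform_measureI)
      show "{0..1::real} \<in> sets lborel" by simp
      have "AE T in lborel. T \<noteq> 0 \<and> T \<noteq> 1 \<and> T \<noteq> t1 \<and> T \<noteq> t2"
        using AE_lborel_singleton[of 0] AE_lborel_singleton[of 1] AE_lborel_singleton[of t1]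
          AE_lborel_singleton[of t2] by eventually_elim auto
      then show "AE T in lborel. T \<in> {0..1} \<longrightarrow> (\<Sum>i=1..d. w i * F T i) = (\<Sum>i=1..d. w i) / 2"
      proof eventually_elim
        case (elim T)
        show ?case
        proof
          assume "T \<in> {0..1}"
          then have "0 < T" "T < 1" using elim by auto
          then show "(\<Sum>i=1..d. w i * F T i) = (\<Sum>i=1..d. w i) / 2"
            using pointwise[of T] elim unfolding sumF tot by auto
        qed
      qed
    qed
    then show ?thesis unfolding M_def
      by (subst AE_distr_iff[OF Fm]) auto
  qed
  ultimately show ?thesis by blast
qed


end
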